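(* Let $n\ge d$, $L=\{\ell_1,\dots,\ell_n\}$, $R=\{r_1,\dots,r_d\}$. For a linkage $(n,d)$-matching field $\mathcal{M}$ on $L\sqcup R$ let $\varphi_{\mathcal{M}}\colon\binom{L}{n-d+1}\to\{v\in\mathbb{Z}_{\ge0}^d:\sum_i v_i=n-d+1\}$ send $\rho$ to the right degree vector of the Chow covector $\Omega_\rho$ of $\mathcal{M}$. If $\mathcal{M}$ and $\mathcal{M}'$ are linkage $(n,d)$-matching fields on $L\sqcup R$ with $\varphi_{\mathcal{M}}=\varphi_{\mathcal{M}'}$, then $\mathcal{M}=\mathcal{M}'$. That is, a linkage matching field is uniquely determined by its map $\varphi_{\mathcal{M}}$.
   Context: All graphs are bipartite graphs on $L\sqcup R$, identified with their edge sets; the right degree vector is $(\deg r_1,\dots,\deg r_d)$. An $(n,d)$-matching field $\mathcal{M}=(M_\sigma)$ assigns to each $d$-subset $\sigma\subseteq L$ a perfect matching $M_\sigma$ between $\sigma$ and $R$. It is linkage if for every $r_i\in R$ and every $(d+1)$-subset $\tau\subseteq L$ there exist distinct $\ell_j,\ell_{j'}\in\tau$ such that $M_{\tau\setminus\{\ell_j\}}$ and $M_{\tau\setminus\{\ell_{j'}\}}$ agree everywhere except on the edges incident with $r_i$. For an $(n-d+1)$-subset $\rho\subseteq L$, the Chow covector $\Omega_\rho$ is the graph with edges $(\ell_j,r)$ for $\ell_j\in\rho$, where $r$ is the node matched to $\ell_j$ in $M_{(L\setminus\rho)\cup\{\ell_j\}}$. *)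

theory Defs
  imports Main
begin

text \<open>Left nodes are L = {0..<n} (standing for l_1..l_n), right nodes are R = {0..<d}
(standing for r_1..r_d).
A matching field assigns to each set sigma an edge set; only its values on
d-subsets of L matter.\<close>

type_synonym graph = "(nat \<times> nat) set"
type_synonym matching_field = "nat set \<Rightarrow> graph"

definition perfect_matching :: "nat set \<Rightarrow> nat set \<Rightarrow> graph \<Rightarrow> bool" where
  "perfect_matching S T E \<longleftrightarrow>
     E \<subseteq> S \<times> T \<and>
     (\<forall>l\<in>S. \<exists>!r. (l, r) \<in> E) \<and>
     (\<forall>r\<in>T. \<exists>!l. (l, r) \<in> E)"

definition matching_field :: "nat \<Rightarrow> nat \<Rightarrow> matching_field \<Rightarrow> bool" where
  "matching_field n d M \<longleftrightarrow>
     (\<forall>\<sigma>. \<sigma> \<subseteq> {0..<n} \<and> card \<sigma> = d \<longrightarrow> perfect_matching \<sigma> {0..<d} (M \<sigma>))"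

definition away_from :: "nat \<Rightarrow> graph \<Rightarrow> graph" where
  "away_from r E = {e \<in> E. snd e \<noteq> r}"

definition linkage :: "nat \<Rightarrow> nat \<Rightarrow> matching_field \<Rightarrow> bool" where
  "linkage n d M \<longleftrightarrow> matching_field n d M \<and>
     (\<forall>r\<in>{0..<d}. \<forall>\<tau>. \<tau> \<subseteq> {0..<n} \<and> card \<tau> = d + 1 \<longrightarrow>
        (\<exists>j\<in>\<tau>. \<exists>j'\<in>\<tau>. j \<noteq> j' \<and>
           away_from r (M (\<tau> - {j})) = away_from r (M (\<tau> - {j'}))))"

definition chow_covector :: "nat \<Rightarrow> matching_field \<Rightarrow> nat set \<Rightarrow> graph" where
  "chow_covector n M \<rho> = {(l, r). l \<in> \<rho> \<and> (l, r) \<in> M (({0..<n} - \<rho>) \<union> {l})}"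

definition right_degree_vector :: "nat \<Rightarrow> graph \<Rightarrow> nat list" where
  "right_degree_vector d E = map (\<lambda>r. card {l. (l, r) \<in> E}) [0..<d]"

definition phi :: "nat \<Rightarrow> nat \<Rightarrow> matching_field \<Rightarrow> nat set \<Rightarrow> nat list" where
  "phi n d M \<rho> = right_degree_vector d (chow_covector n M \<rho>)"

end

theory Submission
  imports Defs
begin
context
  fixes \<tau> :: "nat set" and d :: nat and N :: "nat \<Rightarrow> nat \<Rightarrow> nat"
    and A B :: "nat \<Rightarrow> nat"
  assumes fin: "finite \<tau>" and crd: "card \<tau> = d + 1"
    and inj: "\<forall>j\<in>\<tau>. inj_on (N j) (\<tau> - {j})"
    and img: "\<forall>j\<in>\<tau>. N j ` (\<tau> - {j}) \<subseteq> {0..<d}"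
    and AB: "\<forall>r<d. A r \<in> \<tau> \<and> B r \<in> \<tau> \<and> A r \<noteq> B r \<and> N (A r) (B r) = r \<and> N (B r) (A r) = r
               \<and> (\<forall>q\<in>\<tau> - {A r, B r}. N (A r) q = N (B r) q)"
begin

definition Ed :: "(nat \<times> nat) set" where
  "Ed = {(u,v). \<exists>r<d. (u = A r \<and> v = B r) \<or> (u = B r \<and> v = A r)}"

definition comp :: "nat \<Rightarrow> nat set" where
  "comp i = {j. (i,j) \<in> Ed\<^sup>*}"

definition cl :: "nat set \<Rightarrow> bool" where
  "cl U \<longleftrightarrow> (\<forall>r<d. A r \<in> U \<longleftrightarrow> B r \<in> U)"

lemma comp_sub: assumes "cl U" "i \<in> U" shows "comp i \<subseteq> U"
proof
  fix j assume "j \<in> comp i"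
  then have "(i,j) \<in> Ed\<^sup>*" by (simp add: comp_def)
  then show "j \<in> U"
  proof (induction rule: rtrancl_induct)
    case base then show ?case using assms by simp
  next
    case (step a b) then show ?case using assms(1) unfolding Ed_def cl_def by auto
  qed
qed

lemma cl_tau: "cl \<tau>" using AB unfolding cl_def by auto

lemma comp_in: "i \<in> comp i" by (simp add: comp_def)

lemma cl_comp: "cl (comp i)"
  unfolding cl_def
proof (intro allI impI iffI)
  fix r assume r: "r < d"
  { assume "A r \<in> comp i"
    moreover have "(A r, B r) \<in> Ed" using r unfolding Ed_def by auto
    ultimately show "B r \<in> comp i" unfolding comp_def by (auto intro: rtrancl_into_rtrancl) }
  { assume "B r \<in> comp i"
    moreover have "(B r, A r) \<in> Ed" using r unfolding Ed_def by auto
    ultimately show "A r \<in> comp i" unfolding comp_def by (auto intro: rtrancl_into_rtrancl) }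
qed

lemma const: assumes "j \<in> comp i" "q \<in> \<tau>" "q \<notin> comp i" shows "N j q = N i q"
proof -
  have "(i,j) \<in> Ed\<^sup>*" using assms(1) by (simp add: comp_def)
  then show ?thesis
  proof (induction rule: rtrancl_induct)
    case base then show ?case by simp
  next
    case (step a b)
    have "a \<in> comp i" "b \<in> comp i" using step(1,2) unfolding comp_def
      by (auto intro: rtrancl_into_rtrancl)
    then have "q \<noteq> a" "q \<noteq> b" using assms(3) by auto
    from step(2) obtain r where r: "r < d" "(a = A r \<and> b = B r) \<or> (a = B r \<and> b = A r)"
      unfolding Ed_def by auto
    then have "N a q = N b q" using AB \<open>q \<noteq> a\<close> \<open>q \<noteq> b\<close> assms(2) by (metis Diff_iff insertE singletonD)
    then show ?case using step(3) by simp
  qed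
qed

lemma bound: assumes "i \<in> \<tau>" shows "card {r. r < d \<and> A r \<in> comp i} + 1 \<le> card (comp i)"
proof -
  define C where "C = comp i"
  define H where "H = N i ` (\<tau> - C)"
  define E where "E = {r. r < d \<and> A r \<in> C}"
  have Csub: "C \<subseteq> \<tau>" unfolding C_def using comp_sub[OF cl_tau assms] .
  have iC: "i \<in> C" by (simp add: C_def comp_in)
  have finC: "finite C" using Csub fin finite_subset by blast
  have sub1: "\<tau> - C \<subseteq> \<tau> - {i}" using iC by auto
  have cH: "card H = card (\<tau> - C)" unfolding H_def
    using inj assms sub1 by (meson card_image inj_on_subset)
  have cTC: "card (\<tau> - C) = d + 1 - card C" using Csub fin crd by (simp add: card_Diff_subset finite_subset)
  have "E \<inter> H = {}"
  proof (rule ccontr)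
    assume "E \<inter> H \<noteq> {}"
    then obtain r q where r: "r < d" "A r \<in> C" and q: "q \<in> \<tau>" "q \<notin> C" and rq: "r = N i q"
      unfolding E_def H_def by auto
    have BC: "B r \<in> C" using cl_comp r unfolding C_def cl_def by auto
    have ABr: "A r \<in> \<tau>" "B r \<in> \<tau>" "A r \<noteq> B r" "N (A r) (B r) = r" using AB r by auto
    have "N (A r) q = r" using const[of "A r" i q] r q rq unfolding C_def by simp
    moreover have "q \<noteq> A r" "q \<noteq> B r" using q r BC by auto
    ultimately have "q = B r" using inj ABr q
      by (metis (no_types, lifting) Diff_iff inj_on_def singletonD)
    then show False using \<open>q \<noteq> B r\<close> by simp
  qed
  moreover have "E \<union> H \<subseteq> {0..<d}" unfolding E_def H_def using img assms sub1 by auto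
  ultimately have "card E + card H \<le> d"
    by (metis card_Un_disjoint card_atLeastLessThan card_mono finite_Un finite_atLeastLessThan finite_subset minus_nat.diff_0)
  moreover have "card C \<ge> 1" using iC finC by (metis One_nat_def Suc_leI card_gt_0_iff empty_iff)
  moreover have "card C \<le> d + 1" using Csub fin crd card_mono by metis
  ultimately show ?thesis using cH cTC unfolding E_def C_def by linarith
qed

lemma general: "\<forall>U. card U = m \<and> U \<subseteq> \<tau> \<and> U \<noteq> {} \<and> cl U \<longrightarrow> card {r. r < d \<and> A r \<in> U} + 1 \<le> card U"
proof (induction m rule: less_induct)
  case (less m)
  show ?case
  proof (intro allI impI)
    fix U assume U: "card U = m \<and> U \<subseteq> \<tau> \<and> U \<noteq> {} \<and> cl U"
    then obtain i where i: "i \<in> U" by auto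
    define C where "C = comp i"
    have CU: "C \<subseteq> U" unfolding C_def using comp_sub U i by blast
    have iC: "i \<in> C" by (simp add: C_def comp_in)
    have finU: "finite U" using U fin finite_subset by blast
    define U' where "U' = U - C"
    have clU': "cl U'" using U cl_comp[of i] unfolding U'_def C_def cl_def by blast
    have split: "{r. r < d \<and> A r \<in> U} = {r. r < d \<and> A r \<in> C} \<union> {r. r < d \<and> A r \<in> U'}"
      using CU unfolding U'_def by auto
    have disj: "{r. r < d \<and> A r \<in> C} \<inter> {r. r < d \<and> A r \<in> U'} = {}" unfolding U'_def by auto
    have cs: "card {r. r < d \<and> A r \<in> U} = card {r. r < d \<and> A r \<in> C} + card {r. r < d \<and> A r \<in> U'}"
      using split disj by (simp add: card_Un_disjoint)
    have cU: "card U = card C + card U'" unfolding U'_def using CU finU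
      by (metis card_Diff_subset card_mono finite_subset le_add_diff_inverse)
    have bC: "card {r. r < d \<and> A r \<in> C} + 1 \<le> card C" unfolding C_def
      using bound U i by blast
    show "card {r. r < d \<and> A r \<in> U} + 1 \<le> card U"
    proof (cases "U' = {}")
      case True then show ?thesis using cs cU bC by simp
    next
      case False
      have "card U' < m" using U cU iC finU CU
        by (metis U'_def Diff_iff card_mono finite_subset iC card_gt_0_iff empty_iff less_add_same_cancel2 psubsetI subset_refl
            add_0_right card_0_eq le_neq_implies_less nat_add_left_cancel_less)
      then have "card {r. r < d \<and> A r \<in> U'} + 1 \<le> card U'"
        using less U False clU' unfolding U'_def by blast
      then show ?thesis using cs cU bC by simp
    qed
  qed
qed

lemma connected: assumes "i \<in> \<tau>" shows "comp i = \<tau>"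
proof (rule ccontr)
  assume ne: "comp i \<noteq> \<tau>"
  define C where "C = comp i"
  have Csub: "C \<subseteq> \<tau>" unfolding C_def using comp_sub[OF cl_tau assms] .
  define U' where "U' = \<tau> - C"
  have U'ne: "U' \<noteq> {}" using ne Csub unfolding U'_def C_def by auto
  have clU': "cl U'" using cl_tau cl_comp[of i] unfolding U'_def C_def cl_def by blast
  have split: "{r. r < d} = {r. r < d \<and> A r \<in> C} \<union> {r. r < d \<and> A r \<in> U'}"
    using AB unfolding U'_def by auto
  have disj: "{r. r < d \<and> A r \<in> C} \<inter> {r. r < d \<and> A r \<in> U'} = {}" unfolding U'_def by auto
  have "d = card {r. r < d \<and> A r \<in> C} + card {r. r < d \<and> A r \<in> U'}"
    using split disj by (metis card_Collect_less_nat card_Un_disjoint finite_Collect_conjI finite_Collect_less_nat)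
  moreover have "card {r. r < d \<and> A r \<in> C} + 1 \<le> card C" unfolding C_def using bound assms by blast
  moreover have "card {r. r < d \<and> A r \<in> U'} + 1 \<le> card U'"
    using general[of "card U'"] U'ne clU' unfolding U'_def by blast
  moreover have "card C + card U' = d + 1" unfolding U'_def using Csub fin crd
    by (metis card_Diff_subset card_mono finite_subset le_add_diff_inverse)
  ultimately show False by linarith
qed

lemma first_edge: assumes "i \<in> \<tau>" "j \<in> \<tau>" "j \<noteq> i"
  shows "\<exists>r<d. (A r = i \<or> B r = i) \<and> N j i = r"
proof -
  have "(i,j) \<in> Ed\<^sup>*" using connected[OF assms(1)] assms(2) unfolding comp_def by auto
  then have "j = i \<or> (\<exists>r<d. (A r = i \<or> B r = i) \<and> N j i = r)"
  proof (induction rule: rtrancl_induct)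
    case base then show ?case by simp
  next
    case (step a b)
    from step(2) obtain r0 where r0: "r0 < d" "(a = A r0 \<and> b = B r0) \<or> (a = B r0 \<and> b = A r0)"
      unfolding Ed_def by auto
    show ?case
    proof (cases "b = i")
      case True then show ?thesis by simp
    next
      case bi: False
      show ?thesis
      proof (cases "a = i")
        case True then show ?thesis using r0 AB by auto
      next
        case False
        then obtain r where r: "r < d" "A r = i \<or> B r = i" "N a i = r" using step(3) by auto
        have "N a i = N b i" using AB r0 False bi assms(1) by (metis Diff_iff insertE singletonD)
        then show ?thesis using r by auto
      qed
    qed
  qed
  then show ?thesis using assms(3) by simp
qed

lemma key: assumes "x \<in> \<tau>" "k \<in> \<tau>" "k' \<in> \<tau>" "x \<noteq> k" "x \<noteq> k'" "k \<noteq> k'"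
  and "N x k = r" "N k' x = r" shows "N k x = r"
proof -
  obtain r1 where r1: "r1 < d" "A r1 = k \<or> B r1 = k" "N x k = r1" using first_edge[of k x] assms by auto
  obtain r2 where r2: "r2 < d" "A r2 = x \<or> B r2 = x" "N k' x = r2" using first_edge[of x k'] assms by auto
  have "r1 = r" "r2 = r" using r1 r2 assms by auto
  then show ?thesis using r1 r2 AB assms(4) by metis
qed

end
lemma link_local:
  assumes lk: "linkage n d M" and tsub: "\<tau> \<subseteq> {0..<n}" and tc: "card \<tau> = d + 1"
    and xk: "x \<in> \<tau>" "k \<in> \<tau>" "k' \<in> \<tau>" "x \<noteq> k" "x \<noteq> k'" "k \<noteq> k'"
    and h1: "(k, r) \<in> M (\<tau> - {x})" and h2: "(x, r) \<in> M (\<tau> - {k'})"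
  shows "(x, r) \<in> M (\<tau> - {k})"
proof -
  have fin: "finite \<tau>" using tsub finite_subset by blast
  have pm: "perfect_matching (\<tau> - {j}) {0..<d} (M (\<tau> - {j}))" if "j \<in> \<tau>" for j
  proof -
    have "card (\<tau> - {j}) = d" using that tc fin by simp
    moreover have "\<tau> - {j} \<subseteq> {0..<n}" using tsub by auto
    ultimately show ?thesis using lk unfolding linkage_def matching_field_def by blast
  qed
  define N where "N j i = (THE s. (i, s) \<in> M (\<tau> - {j}))" for j i
  have Nmem: "(i, N j i) \<in> M (\<tau> - {j})" if "j \<in> \<tau>" "i \<in> \<tau> - {j}" for j i
  proof -
    have "\<exists>!s. (i, s) \<in> M (\<tau> - {j})" using pm[OF that(1)] that(2) unfolding perfect_matching_def by blast
    then show ?thesis unfolding N_def by (rule theI')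
  qed
  have Nuniq: "i \<in> \<tau> - {j} \<and> s \<in> {0..<d} \<and> N j i = s" if "j \<in> \<tau>" "(i, s) \<in> M (\<tau> - {j})" for j i s
  proof -
    have sub: "i \<in> \<tau> - {j}" "s \<in> {0..<d}" using pm[OF that(1)] that(2) unfolding perfect_matching_def by auto
    have "\<exists>!s. (i, s) \<in> M (\<tau> - {j})" using pm[OF that(1)] sub(1) unfolding perfect_matching_def by blast
    then show ?thesis using sub Nmem[OF that(1) sub(1)] that(2) by blast
  qed
  have inj: "\<forall>j\<in>\<tau>. inj_on (N j) (\<tau> - {j})"
  proof (intro ballI inj_onI)
    fix j i i' assume j: "j \<in> \<tau>" and i: "i \<in> \<tau> - {j}" "i' \<in> \<tau> - {j}" and e: "N j i = N j i'"
    have m: "(i, N j i) \<in> M (\<tau> - {j})" "(i', N j i) \<in> M (\<tau> - {j})" using Nmem[OF j i(1)] Nmem[OF j i(2)] e by auto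
    have "N j i \<in> {0..<d}" using Nuniq[OF j m(1)] by blast
    then have "\<exists>!l. (l, N j i) \<in> M (\<tau> - {j})" using pm[OF j] unfolding perfect_matching_def by blast
    then show "i = i'" using m by blast
  qed
  have img: "\<forall>j\<in>\<tau>. N j ` (\<tau> - {j}) \<subseteq> {0..<d}"
  proof (intro ballI image_subsetI)
    fix j i assume j: "j \<in> \<tau>" and i: "i \<in> \<tau> - {j}"
    show "N j i \<in> {0..<d}" using Nuniq[OF j Nmem[OF j i]] by blast
  qed
  define P where "P r a b \<longleftrightarrow> a \<in> \<tau> \<and> b \<in> \<tau> \<and> a \<noteq> b \<and> N a b = r \<and> N b a = r
               \<and> (\<forall>q\<in>\<tau> - {a, b}. N a q = N b q)" for r a b
  have ex: "\<exists>ab. r < d \<longrightarrow> P r (fst ab) (snd ab)" for r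
  proof (cases "r < d")
    case False then show ?thesis by simp
  next
    case True
    then obtain a b where ab: "a \<in> \<tau>" "b \<in> \<tau>" "a \<noteq> b"
        and eq: "away_from r (M (\<tau> - {a})) = away_from r (M (\<tau> - {b}))"
      using lk tsub tc unfolding linkage_def by (meson atLeastLessThan_iff zero_le)
    have mv: "(i, s) \<in> M (\<tau> - {b})" if "(i, s) \<in> M (\<tau> - {a})" "s \<noteq> r" for i s
    proof -
      have "(i, s) \<in> away_from r (M (\<tau> - {a}))" using that unfolding away_from_def by simp
      then have "(i, s) \<in> away_from r (M (\<tau> - {b}))" using eq by simp
      then show ?thesis unfolding away_from_def by simp
    qed
    have mv2: "(i, s) \<in> M (\<tau> - {a})" if "(i, s) \<in> M (\<tau> - {b})" "s \<noteq> r" for i s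
    proof -
      have "(i, s) \<in> away_from r (M (\<tau> - {b}))" using that unfolding away_from_def by simp
      then have "(i, s) \<in> away_from r (M (\<tau> - {a}))" using eq by simp
      then show ?thesis unfolding away_from_def by simp
    qed
    have 1: "N a b = r"
    proof (rule ccontr)
      assume "N a b \<noteq> r"
      have "b \<in> \<tau> - {a}" using ab by auto
      then have "(b, N a b) \<in> M (\<tau> - {b})" using mv[OF Nmem[OF ab(1)]] \<open>N a b \<noteq> r\<close> by blast
      then show False using Nuniq[OF ab(2)] by blast
    qed
    have 2: "N b a = r"
    proof (rule ccontr)
      assume "N b a \<noteq> r"
      have "a \<in> \<tau> - {b}" using ab by auto
      then have "(a, N b a) \<in> M (\<tau> - {a})" using mv2[OF Nmem[OF ab(2)]] \<open>N b a \<noteq> r\<close> by blast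
      then show False using Nuniq[OF ab(1)] by blast
    qed
    have 3: "\<forall>q\<in>\<tau> - {a, b}. N a q = N b q"
    proof
      fix q assume q: "q \<in> \<tau> - {a, b}"
      show "N a q = N b q"
      proof (cases "N a q = r")
        case True
        then have "N a q = N a b" using 1 by simp
        moreover have "q \<in> \<tau> - {a}" "b \<in> \<tau> - {a}" using q ab by auto
        ultimately have "q = b" using inj ab(1) unfolding inj_on_def by blast
        then show ?thesis using q by simp
      next
        case False
        have "q \<in> \<tau> - {a}" using q by auto
        then have "(q, N a q) \<in> M (\<tau> - {b})" using mv[OF Nmem[OF ab(1)]] False by blast
        then show ?thesis using Nuniq[OF ab(2)] by auto
      qed
    qed
    show ?thesis using ab 1 2 3 unfolding P_def by (intro exI[of _ "(a,b)"]) simp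
  qed
  obtain f where f: "\<forall>r. r < d \<longrightarrow> P r (fst (f r)) (snd (f r))" using choice[of "\<lambda>r ab. r < d \<longrightarrow> P r (fst ab) (snd ab)"] ex by blast
  define A where "A r = fst (f r)" for r
  define B where "B r = snd (f r)" for r
  have AB: "\<forall>r<d. A r \<in> \<tau> \<and> B r \<in> \<tau> \<and> A r \<noteq> B r \<and> N (A r) (B r) = r \<and> N (B r) (A r) = r
               \<and> (\<forall>q\<in>\<tau> - {A r, B r}. N (A r) q = N (B r) q)"
    using f unfolding A_def B_def P_def by blast
  have "N x k = r" using Nuniq xk h1 by blast
  moreover have "N k' x = r" using Nuniq xk h2 by blast
  ultimately have "N k x = r" using key[OF fin tc inj img AB] xk by blast
  then show ?thesis using Nmem xk by auto
qed


lemma count_less: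
  assumes lk: "linkage n d M" and ss: "\<sigma> \<subseteq> {0..<n}" and cs: "card \<sigma> = d"
    and k: "k \<in> \<sigma>" "k'' \<in> \<sigma>" "k \<noteq> k''" and kr: "(k, r) \<in> M \<sigma>"
  shows "card {l. (l, r) \<in> chow_covector n M (({0..<n} - \<sigma>) \<union> {k''})}
       < card {l. (l, r) \<in> chow_covector n M (({0..<n} - \<sigma>) \<union> {k})}"
proof -
  have pm: "perfect_matching \<sigma> {0..<d} (M \<sigma>)" using lk ss cs unfolding linkage_def matching_field_def by blast
  have rd: "r \<in> {0..<d}" using pm kr unfolding perfect_matching_def by auto
  have finS: "finite \<sigma>" using ss finite_subset by blast
  have cmp: "{0..<n} - (({0..<n} - \<sigma>) \<union> {j}) = \<sigma> - {j}" if "j \<in> \<sigma>" for j using that ss by auto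
  define S where "S j = {l. (l, r) \<in> chow_covector n M (({0..<n} - \<sigma>) \<union> {j})}" for j
  have S_eq: "S j = {l. l \<in> ({0..<n} - \<sigma>) \<union> {j} \<and> (l, r) \<in> M ((\<sigma> - {j}) \<union> {l})}" if "j \<in> \<sigma>" for j
    unfolding S_def chow_covector_def using cmp[OF that] by auto
  have kS: "k \<in> S k" using S_eq[OF k(1)] kr k(1) by (simp add: insert_absorb)
  have finSk: "finite (S k)" using S_eq[OF k(1)] by (auto intro: finite_subset[of _ "{0..<n} \<union> {k}"])
  have sub: "S k'' \<subseteq> S k - {k}"
  proof
    fix l assume l: "l \<in> S k''"
    then have l1: "l \<in> ({0..<n} - \<sigma>) \<union> {k''}" and l2: "(l, r) \<in> M ((\<sigma> - {k''}) \<union> {l})"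
      using S_eq[OF k(2)] by auto
    show "l \<in> S k - {k}"
    proof (cases "l = k''")
      case True
      then have "(k'', r) \<in> M \<sigma>" using l2 k(2) by (simp add: insert_absorb)
      then have "k'' = k" using kr rd pm unfolding perfect_matching_def by blast
      then show ?thesis using k(3) by simp
    next
      case False
      then have ln: "l \<in> {0..<n}" "l \<notin> \<sigma>" using l1 by auto
      define \<tau> where "\<tau> = insert l \<sigma>"
      have ts: "\<tau> \<subseteq> {0..<n}" using ss ln unfolding \<tau>_def by auto
      have tc: "card \<tau> = d + 1" using ln finS cs unfolding \<tau>_def by simp
      have e1: "\<tau> - {l} = \<sigma>" using ln unfolding \<tau>_def by auto
      have e2: "\<tau> - {k''} = (\<sigma> - {k''}) \<union> {l}" using ln k unfolding \<tau>_def by auto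
      have e3: "\<tau> - {k} = (\<sigma> - {k}) \<union> {l}" using ln k unfolding \<tau>_def by auto
      have "(l, r) \<in> M (\<tau> - {k})"
        using link_local[OF lk ts tc, of l k k'' r] e1 e2 kr l2 ln k unfolding \<tau>_def by auto
      then show ?thesis using S_eq[OF k(1)] e3 ln k by auto
    qed
  qed
  have "card (S k'') \<le> card (S k - {k})" using sub finSk by (simp add: card_mono)
  also have "\<dots> < card (S k)" by (rule card_Diff1_less[OF finSk kS])
  finally show ?thesis unfolding S_def .
qed

theorem theorem3p29:
  fixes n d :: nat and M M' :: matching_field
  assumes "d \<le> n"
    and "linkage n d M" and "linkage n d M'"
    and "\<forall>\<rho>. \<rho> \<subseteq> {0..<n} \<and> card \<rho> = n - d + 1 \<longrightarrow> phi n d M \<rho> = phi n d M' \<rho>"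
  shows "\<forall>\<sigma>. \<sigma> \<subseteq> {0..<n} \<and> card \<sigma> = d \<longrightarrow> M \<sigma> = M' \<sigma>"
proof (intro allI impI)
  fix \<sigma> assume s: "\<sigma> \<subseteq> {0..<n} \<and> card \<sigma> = d"
  have finS: "finite \<sigma>" using s finite_subset by blast
  have pm: "perfect_matching \<sigma> {0..<d} (M \<sigma>)" using assms(2) s unfolding linkage_def matching_field_def by blast
  have pm': "perfect_matching \<sigma> {0..<d} (M' \<sigma>)" using assms(3) s unfolding linkage_def matching_field_def by blast
  define \<rho> where "\<rho> j = ({0..<n} - \<sigma>) \<union> {j}" for j
  have cnt: "card {l. (l, r) \<in> chow_covector n M (\<rho> j)} = card {l. (l, r) \<in> chow_covector n M' (\<rho> j)}"
    if "j \<in> \<sigma>" "r < d" for j r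
  proof -
    have "\<rho> j \<subseteq> {0..<n}" using s that unfolding \<rho>_def by auto
    moreover have "card (\<rho> j) = n - d + 1"
    proof -
      have "card ({0..<n} - \<sigma>) = n - d" using s by (simp add: card_Diff_subset finS)
      then show ?thesis unfolding \<rho>_def using that by simp
    qed
    ultimately have "phi n d M (\<rho> j) ! r = phi n d M' (\<rho> j) ! r" using assms(4) by simp
    then show ?thesis using that(2) unfolding phi_def right_degree_vector_def by simp
  qed
  have one: "(k, r) \<in> M' \<sigma>" if kr: "(k, r) \<in> M \<sigma>" for k r
  proof (rule ccontr)
    assume nk: "(k, r) \<notin> M' \<sigma>"
    have k: "k \<in> \<sigma>" and r: "r \<in> {0..<d}" using pm kr unfolding perfect_matching_def by auto
    obtain k'' where k'': "(k'', r) \<in> M' \<sigma>" using pm' r unfolding perfect_matching_def by blast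
    have k''s: "k'' \<in> \<sigma>" using pm' k'' unfolding perfect_matching_def by auto
    have ne: "k \<noteq> k''" using nk k'' by auto
    have "card {l. (l, r) \<in> chow_covector n M (\<rho> k'')} < card {l. (l, r) \<in> chow_covector n M (\<rho> k)}"
      using count_less[OF assms(2), of \<sigma> k k'' r] s k k''s ne kr unfolding \<rho>_def by auto
    moreover have "card {l. (l, r) \<in> chow_covector n M' (\<rho> k)} < card {l. (l, r) \<in> chow_covector n M' (\<rho> k'')}"
      using count_less[OF assms(3), of \<sigma> k'' k r] s k k''s ne k'' unfolding \<rho>_def by auto
    ultimately show False using cnt[OF k] cnt[OF k''s] r by auto
  qed
  show "M \<sigma> = M' \<sigma>"
  proof
    show "M \<sigma> \<subseteq> M' \<sigma>" using one by auto
    show "M' \<sigma> \<subseteq> M \<sigma>"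
    proof
      fix e assume e: "e \<in> M' \<sigma>"
      obtain k r where er: "e = (k, r)" by fastforce
      have k: "k \<in> \<sigma>" using pm' e er unfolding perfect_matching_def by auto
      obtain r0 where r0: "(k, r0) \<in> M \<sigma>" using pm k unfolding perfect_matching_def by blast
      have "(k, r0) \<in> M' \<sigma>" using one r0 by blast
      then have "r0 = r" using pm' k e er unfolding perfect_matching_def by blast
      then show "e \<in> M \<sigma>" using r0 er by simp
    qed
  qed
qed

end
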